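(* Fix a feature dimension $d$ and a finite label set $\mathcal{Y}$. There exist functions $f^{(1)}_{\text{agg}}, f^{(2)}_{\text{agg}}, \ldots$ and $f_{\text{pred}}$ such that the following holds. For every $\varepsilon > 0$, every connected graph $G = (V, E, \boldsymbol{X})$ with node features $\boldsymbol{X} \in \mathbb{R}^{n \times d}$, every nonempty set of labeled nodes $V_{\text{train}} \subset V$ with labels $\boldsymbol{Y}_{\text{train}} \in \mathcal{Y}^{V_{\text{train}}}$, and every test node $v \in V \setminus V_{\text{train}}$, there exists $L \in \mathbb{Z}_+$ such that for every $l \ge L$ the message passing GNN $(f^{(1)}_{\text{agg}}, \ldots, f^{(l)}_{\text{agg}}, f_{\text{pred}})$ with labels as features (LaF) outputs $\hat{\boldsymbol{y}}_v$ satisfying $$\left\| \hat{\boldsymbol{y}}_v - \hat{\boldsymbol{y}}^{\text{LP}}_{v} \right\|_1 \le \varepsilon,$$ where $\hat{\boldsymbol{y}}^{\text{LP}}_{v}$ is the output of label propagation at $v$.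
   Context: A graph is $G=(V,E,\boldsymbol{X})$ with nodes $V=\{1,\dots,n\}$, edge set $E$ (undirected), node features $\boldsymbol{X}=[\boldsymbol{x}_1,\dots,\boldsymbol{x}_n]^\top\in\mathbb{R}^{n\times d}$; $\mathcal{N}(v)$ is the set of neighbors of $v$ and $\deg(v)=|\mathcal{N}(v)|$. For a label $c \in \mathcal{Y}$, $\boldsymbol{y}_v\in\mathbb{R}^{\mathcal{Y}}$ denotes the one-hot encoding of the label of a labeled node $v$. A message passing GNN $(f^{(1)}_{\text{agg}},\dots,f^{(l)}_{\text{agg}},f_{\text{pred}})$ computes $\boldsymbol{h}^{(k)}_v = f^{(k)}_{\text{agg}}(\boldsymbol{h}^{(k-1)}_v, \{\!\{\boldsymbol{h}^{(k-1)}_u : u\in\mathcal{N}(v)\}\!\})$ for $k=1,\dots,l$ and all $v\in V$ (the second argument is a multiset), and outputs $\hat{\boldsymbol{y}}_v=f_{\text{pred}}(\boldsymbol{h}^{(l)}_v)$. With labels as features (LaF), the initialization is $\boldsymbol{h}^{(0)}_v=[\boldsymbol{x}_v;\tilde{\boldsymbol{y}}_v]\in\mathbb{R}^{d+1+|\mathcal{Y}|}$, where $\tilde{\boldsymbol{y}}_v=[1;\boldsymbol{y}_v]$ if $v\in V_{\text{train}}$ and $\tilde{\boldsymbol{y}}_v=\mathbf{0}_{1+|\mathcal{Y}|}$ otherwise ($[\cdot;\cdot]$ is concatenation). Label propagation: for a test node $v$, run a simple random walk from $v$ (each step moves to a uniformly random neighbor of the current node); $\hat{\boldsymbol{y}}^{\text{LP}}_{v}\in\mathbb{R}^{\mathcal{Y}}$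 has $i$-th entry equal to the probability that the first node of $V_{\text{train}}$ hit by the walk has label $i$. *)

theory Defs
  imports Complex_Main "HOL-Library.Multiset"
begin

definition simple_graph_on :: "nat set \<Rightarrow> (nat \<Rightarrow> nat \<Rightarrow> bool) \<Rightarrow> bool" where
  "simple_graph_on V E \<longleftrightarrow> finite V \<and> (\<forall>a b. E a b \<longrightarrow> a \<in> V \<and> b \<in> V)
     \<and> (\<forall>a b. E a b \<longrightarrow> E b a) \<and> (\<forall>a. \<not> E a a)"

definition connected_on :: "nat set \<Rightarrow> (nat \<Rightarrow> nat \<Rightarrow> bool) \<Rightarrow> bool" where
  "connected_on V E \<longleftrightarrow> (\<forall>a\<in>V. \<forall>b\<in>V. (a, b) \<in> {(x, y). E x y}\<^sup>*)"

definition nbrs :: "nat set \<Rightarrow> (nat \<Rightarrow> nat \<Rightarrow> bool) \<Rightarrow> nat \<Rightarrow> nat set" where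
  "nbrs V E v = {u \<in> V. E v u}"

definition degree :: "nat set \<Rightarrow> (nat \<Rightarrow> nat \<Rightarrow> bool) \<Rightarrow> nat \<Rightarrow> nat" where
  "degree V E v = card (nbrs V E v)"

text \<open>Labels: the finite label set is {0..<k}; one-hot encoding as a list of length k.\<close>

definition one_hot :: "nat \<Rightarrow> nat \<Rightarrow> real list" where
  "one_hot k c = map (\<lambda>i. if i = c then 1 else 0) [0..<k]"

definition laf_label :: "nat set \<Rightarrow> (nat \<Rightarrow> nat) \<Rightarrow> nat \<Rightarrow> nat \<Rightarrow> real list" where
  "laf_label Vt Y k v = (if v \<in> Vt then 1 # one_hot k (Y v) else replicate (Suc k) 0)"

primrec laf_hidden :: "(nat \<Rightarrow> real list \<Rightarrow> real list multiset \<Rightarrow> real list) \<Rightarrow> nat set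
    \<Rightarrow> (nat \<Rightarrow> nat \<Rightarrow> bool) \<Rightarrow> (nat \<Rightarrow> real list) \<Rightarrow> nat set \<Rightarrow> (nat \<Rightarrow> nat) \<Rightarrow> nat
    \<Rightarrow> nat \<Rightarrow> nat \<Rightarrow> real list" where
  "laf_hidden fagg V E X Vt Y k 0 v = X v @ laf_label Vt Y k v"
| "laf_hidden fagg V E X Vt Y k (Suc j) v =
     fagg (Suc j) (laf_hidden fagg V E X Vt Y k j v)
       (image_mset (\<lambda>u. laf_hidden fagg V E X Vt Y k j u) (mset_set (nbrs V E v)))"

text \<open>The event "the first training node hit by the simple random walk
  from v has label i" is the disjoint union over the hitting time t of the events
  "the walk u_0 = v, ..., u_t avoids Vt at times < t, and u_t is in Vt with label i".\<close>

definition first_hit_walks :: "nat set \<Rightarrow> (nat \<Rightarrow> nat \<Rightarrow> bool) \<Rightarrow> nat set \<Rightarrow> (nat \<Rightarrow> nat)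
    \<Rightarrow> nat \<Rightarrow> nat \<Rightarrow> nat \<Rightarrow> nat list set" where
  "first_hit_walks V E Vt Y v i t = {ws. length ws = Suc t \<and> ws ! 0 = v
      \<and> (\<forall>j<t. ws ! Suc j \<in> nbrs V E (ws ! j) \<and> ws ! j \<notin> Vt)
      \<and> ws ! t \<in> Vt \<and> Y (ws ! t) = i}"

definition walk_prob :: "nat set \<Rightarrow> (nat \<Rightarrow> nat \<Rightarrow> bool) \<Rightarrow> nat list \<Rightarrow> real" where
  "walk_prob V E ws = (\<Prod>j<length ws - 1. 1 / real (degree V E (ws ! j)))"

definition label_prop :: "nat set \<Rightarrow> (nat \<Rightarrow> nat \<Rightarrow> bool) \<Rightarrow> nat set \<Rightarrow> (nat \<Rightarrow> nat)
    \<Rightarrow> nat \<Rightarrow> nat \<Rightarrow> real" where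
  "label_prop V E Vt Y v i =
     (\<Sum>t. \<Sum>ws\<in>first_hit_walks V E Vt Y v i t. walk_prob V E ws)"

end

theory Submission
  imports Defs
begin

definition S :: "nat set \<Rightarrow> (nat \<Rightarrow> nat \<Rightarrow> bool) \<Rightarrow> nat set \<Rightarrow> (nat \<Rightarrow> nat) \<Rightarrow> nat \<Rightarrow> nat \<Rightarrow> nat \<Rightarrow> real" where
  "S V E Vt Y u i t = (\<Sum>ws\<in>first_hit_walks V E Vt Y u i t. walk_prob V E ws)"

lemma fhw_finite:
  assumes "finite V"
  shows "finite (first_hit_walks V E Vt Y u i t)"
proof (rule finite_subset)
  show "first_hit_walks V E Vt Y u i t \<subseteq> {xs. set xs \<subseteq> insert u V \<and> length xs = Suc t}"
  proof
    fix ws assume ws: "ws \<in> first_hit_walks V E Vt Y u i t"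
    have "ws ! j \<in> insert u V" if "j < Suc t" for j
    proof (cases j)
      case 0 then show ?thesis using ws by (simp add: first_hit_walks_def)
    next
      case (Suc j') then show ?thesis using ws that by (auto simp: first_hit_walks_def nbrs_def)
    qed
    moreover have "length ws = Suc t" using ws by (simp add: first_hit_walks_def)
    ultimately show "ws \<in> {xs. set xs \<subseteq> insert u V \<and> length xs = Suc t}"
      by (auto simp: in_set_conv_nth) (metis insert_iff)
  qed
  show "finite {xs. set xs \<subseteq> insert u V \<and> length xs = Suc t}"
    using assms by (intro finite_lists_length_eq) auto
qed

lemma fhw_0: "first_hit_walks V E Vt Y u i 0 = (if u \<in> Vt \<and> Y u = i then {[u]} else {})"
proof -
  have "ws = [u]" if "length ws = Suc 0" "ws ! 0 = u" for ws
    using that by (cases ws) auto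
  then show ?thesis by (auto simp: first_hit_walks_def)
qed

lemma fhw_train: "u \<in> Vt \<Longrightarrow> first_hit_walks V E Vt Y u i (Suc t) = {}"
  by (auto simp: first_hit_walks_def)

lemma fhw_Suc:
  assumes "u \<notin> Vt"
  shows "first_hit_walks V E Vt Y u i (Suc t) =
    (\<Union>w\<in>nbrs V E u. (\<lambda>ws. u # ws) ` first_hit_walks V E Vt Y w i t)"
proof (intro equalityI subsetI)
  fix ws assume ws: "ws \<in> first_hit_walks V E Vt Y u i (Suc t)"
  then obtain xs where xs: "ws = u # xs" "length xs = Suc t"
    by (cases ws) (auto simp: first_hit_walks_def)
  have h: "\<forall>j<Suc t. ws ! Suc j \<in> nbrs V E (ws ! j) \<and> ws ! j \<notin> Vt"
     "ws ! Suc t \<in> Vt" "Y (ws ! Suc t) = i"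
    using ws by (auto simp: first_hit_walks_def)
  have "xs ! 0 \<in> nbrs V E u" using h(1)[rule_format, of 0] xs by simp
  moreover have "xs \<in> first_hit_walks V E Vt Y (xs ! 0) i t"
    unfolding first_hit_walks_def
  proof (intro CollectI conjI allI impI)
    fix j assume "j < t"
    then show "xs ! Suc j \<in> nbrs V E (xs ! j)" "xs ! j \<notin> Vt"
      using h(1)[rule_format, of "Suc j"] xs by auto
  qed (use xs h in auto)
  ultimately show "ws \<in> (\<Union>w\<in>nbrs V E u. (\<lambda>ws. u # ws) ` first_hit_walks V E Vt Y w i t)"
    using xs by blast
next
  fix ws assume "ws \<in> (\<Union>w\<in>nbrs V E u. (\<lambda>ws. u # ws) ` first_hit_walks V E Vt Y w i t)"
  then obtain w xs where w: "w \<in> nbrs V E u" and xs: "xs \<in> first_hit_walks V E Vt Y w i t"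
    and ws: "ws = u # xs" by blast
  have h: "\<forall>j<t. xs ! Suc j \<in> nbrs V E (xs ! j) \<and> xs ! j \<notin> Vt"
     "xs ! t \<in> Vt" "Y (xs ! t) = i" "length xs = Suc t" "xs ! 0 = w"
    using xs by (auto simp: first_hit_walks_def)
  show "ws \<in> first_hit_walks V E Vt Y u i (Suc t)"
    unfolding first_hit_walks_def
  proof (intro CollectI conjI allI impI)
    fix j assume j: "j < Suc t"
    show "ws ! Suc j \<in> nbrs V E (ws ! j)" "ws ! j \<notin> Vt"
    proof -
      have "ws ! Suc j \<in> nbrs V E (ws ! j) \<and> ws ! j \<notin> Vt"
      proof (cases j)
        case 0 then show ?thesis using w h assms ws by simp
      next
        case (Suc j') then show ?thesis using h(1)[rule_format, of j'] j ws by simp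
      qed
      then show "ws ! Suc j \<in> nbrs V E (ws ! j)" "ws ! j \<notin> Vt" by auto
    qed
  qed (use ws h in auto)
qed

lemma walk_prob_Cons:
  assumes "xs \<noteq> []"
  shows "walk_prob V E (u # xs) = 1 / real (degree V E u) * walk_prob V E xs"
proof -
  obtain m where m: "length xs = Suc m" using assms by (cases xs) auto
  show ?thesis unfolding walk_prob_def using m
    by (simp add: prod.lessThan_Suc_shift del: prod.lessThan_Suc)
qed

lemma S_Suc:
  assumes "finite V" "u \<notin> Vt"
  shows "S V E Vt Y u i (Suc t) = 1 / real (degree V E u) * (\<Sum>w\<in>nbrs V E u. S V E Vt Y w i t)"
proof -
  have fin: "finite (nbrs V E u)" using assms by (simp add: nbrs_def)
  have "S V E Vt Y u i (Suc t) = (\<Sum>w\<in>nbrs V E u. \<Sum>ws\<in>(\<lambda>ws. u # ws) ` first_hit_walks V E Vt Y w i t. walk_prob V E ws)"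
    unfolding S_def fhw_Suc[OF assms(2)]
  proof (rule sum.UNION_disjoint)
    show "finite (nbrs V E u)" by (fact fin)
    show "\<forall>w\<in>nbrs V E u. finite ((#) u ` first_hit_walks V E Vt Y w i t)"
      using fhw_finite[OF assms(1)] by blast
    show "\<forall>w\<in>nbrs V E u. \<forall>w'\<in>nbrs V E u. w \<noteq> w' \<longrightarrow>
      (#) u ` first_hit_walks V E Vt Y w i t \<inter> (#) u ` first_hit_walks V E Vt Y w' i t = {}"
      by (auto simp: first_hit_walks_def)
  qed
  also have "\<dots> = (\<Sum>w\<in>nbrs V E u. 1 / real (degree V E u) * S V E Vt Y w i t)"
  proof (rule sum.cong[OF refl])
    fix w
    have "(\<Sum>ws\<in>(\<lambda>ws. u # ws) ` first_hit_walks V E Vt Y w i t. walk_prob V E ws)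
       = (\<Sum>ws\<in>first_hit_walks V E Vt Y w i t. walk_prob V E (u # ws))"
      by (rule sum.reindex_cong[where l = "\<lambda>ws. u # ws"]) (auto simp: inj_on_def)
    also have "\<dots> = (\<Sum>ws\<in>first_hit_walks V E Vt Y w i t. 1 / real (degree V E u) * walk_prob V E ws)"
      by (rule sum.cong[OF refl], rule walk_prob_Cons) (auto simp: first_hit_walks_def)
    finally show "(\<Sum>ws\<in>(\<lambda>ws. u # ws) ` first_hit_walks V E Vt Y w i t. walk_prob V E ws)
       = 1 / real (degree V E u) * S V E Vt Y w i t" by (simp add: S_def sum_distrib_left)
  qed
  finally show ?thesis by (simp add: sum_distrib_left)
qed


definition P :: "nat set \<Rightarrow> (nat \<Rightarrow> nat \<Rightarrow> bool) \<Rightarrow> nat set \<Rightarrow> (nat \<Rightarrow> nat) \<Rightarrow> nat \<Rightarrow> nat \<Rightarrow> nat \<Rightarrow> real" where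
  "P V E Vt Y u i l = (\<Sum>t\<le>l. S V E Vt Y u i t)"

lemma S_nonneg: "S V E Vt Y u i t \<ge> 0"
  unfolding S_def walk_prob_def by (intro sum_nonneg prod_nonneg) auto

lemma S_train0: "S V E Vt Y u i 0 = (if u \<in> Vt \<and> Y u = i then 1 else 0)"
  by (simp add: S_def fhw_0 walk_prob_def)

lemma P_train: "u \<in> Vt \<Longrightarrow> P V E Vt Y u i l = (if Y u = i then 1 else 0)"
  by (induction l) (simp_all add: P_def S_train0, simp add: S_def fhw_train)

lemma P_Suc:
  assumes "finite V" "u \<notin> Vt"
  shows "P V E Vt Y u i (Suc l) = 1 / real (degree V E u) * (\<Sum>w\<in>nbrs V E u. P V E Vt Y w i l)"
proof -
  have "P V E Vt Y u i (Suc l) = S V E Vt Y u i 0 + (\<Sum>t\<le>l. S V E Vt Y u i (Suc t))"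
    unfolding P_def by (rule sum.atMost_Suc_shift)
  also have "\<dots> = (\<Sum>t\<le>l. 1 / real (degree V E u) * (\<Sum>w\<in>nbrs V E u. S V E Vt Y w i t))"
    using assms by (simp add: S_train0 S_Suc)
  also have "\<dots> = 1 / real (degree V E u) * (\<Sum>w\<in>nbrs V E u. P V E Vt Y w i l)"
    unfolding P_def by (simp add: sum_divide_distrib[symmetric] sum.swap[of _ "nbrs V E u"])
  finally show ?thesis .
qed

lemma P_nontrain0: "u \<notin> Vt \<Longrightarrow> P V E Vt Y u i 0 = 0"
  by (simp add: P_def S_train0)

lemma P_le1:
  assumes "finite V"
  shows "P V E Vt Y u i l \<le> 1"
proof (induction l arbitrary: u)
  case 0 then show ?case by (simp add: P_def S_train0)
next
  case (Suc l)
  show ?case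
  proof (cases "u \<in> Vt")
    case True then show ?thesis by (simp add: P_train)
  next
    case False
    have "(\<Sum>w\<in>nbrs V E u. P V E Vt Y w i l) \<le> real (degree V E u)"
      unfolding degree_def using sum_mono[of "nbrs V E u" "\<lambda>w. P V E Vt Y w i l" "\<lambda>_. 1"] Suc
      by simp
    moreover have "(\<Sum>w\<in>nbrs V E u. P V E Vt Y w i l) \<ge> 0"
      unfolding P_def by (intro sum_nonneg) (simp add: S_nonneg)
    ultimately show ?thesis using P_Suc[OF assms False]
      by (cases "degree V E u = 0") (auto simp: field_simps)
  qed
qed

definition fagg0 :: "nat \<Rightarrow> nat \<Rightarrow> real list \<Rightarrow> real list multiset \<Rightarrow> real list" where
  "fagg0 d k h M = (if h ! d = 1 then h else take (Suc d) h @
     map (\<lambda>i. sum_mset (image_mset (\<lambda>g. g ! (Suc d + i)) M) / real (size M)) [0..<k])"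

definition fpred0 :: "nat \<Rightarrow> nat \<Rightarrow> real list \<Rightarrow> real list" where
  "fpred0 d k h = map (\<lambda>i. h ! (Suc d + i)) [0..<k]"

lemma invariant:
  assumes V: "finite V" and nb: "\<And>u. nbrs V E u \<subseteq> V"
    and X: "\<forall>u\<in>V. length (X u) = d" and Yk: "\<forall>u\<in>Vt. Y u < k"
  shows "\<forall>u\<in>V. length (laf_hidden (\<lambda>_. fagg0 d k) V E X Vt Y k l u) = Suc (d + k)
     \<and> laf_hidden (\<lambda>_. fagg0 d k) V E X Vt Y k l u ! d = (if u \<in> Vt then 1 else 0)
     \<and> (\<forall>i<k. laf_hidden (\<lambda>_. fagg0 d k) V E X Vt Y k l u ! (Suc d + i) = P V E Vt Y u i l)"
proof (induction l)
  case 0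
  show ?case
  proof (intro ballI conjI allI impI)
    fix u assume u: "u \<in> V"
    then have lx: "length (X u) = d" using X by blast
    show "length (laf_hidden (\<lambda>_. fagg0 d k) V E X Vt Y k 0 u) = Suc (d + k)"
      using lx by (simp add: laf_label_def one_hot_def)
    show "laf_hidden (\<lambda>_. fagg0 d k) V E X Vt Y k 0 u ! d = (if u \<in> Vt then 1 else 0)"
      using lx by (simp add: laf_label_def nth_append)
    fix i assume i: "i < k"
    show "laf_hidden (\<lambda>_. fagg0 d k) V E X Vt Y k 0 u ! (Suc d + i) = P V E Vt Y u i 0"
      using lx i by (auto simp add: laf_label_def nth_append one_hot_def P_train P_nontrain0)
  qed
next
  case (Suc l)
  let ?H = "laf_hidden (\<lambda>_. fagg0 d k) V E X Vt Y k"
  show ?case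
  proof (intro ballI)
    fix u assume u: "u \<in> V"
    have IH: "length (?H l u) = Suc (d + k)" "?H l u ! d = (if u \<in> Vt then 1 else 0)"
      "\<And>i. i < k \<Longrightarrow> ?H l u ! (Suc d + i) = P V E Vt Y u i l"
      using Suc u by auto
    show "length (?H (Suc l) u) = Suc (d + k) \<and> ?H (Suc l) u ! d = (if u \<in> Vt then 1 else 0)
       \<and> (\<forall>i<k. ?H (Suc l) u ! (Suc d + i) = P V E Vt Y u i (Suc l))"
    proof (cases "u \<in> Vt")
      case True
      then show ?thesis using IH by (simp add: fagg0_def P_train)
    next
      case False
      have fin: "finite (nbrs V E u)" using V nb finite_subset by blast
      have eq: "?H (Suc l) u = take (Suc d) (?H l u) @
        map (\<lambda>i. (\<Sum>w\<in>nbrs V E u. ?H l w ! (Suc d + i)) / real (degree V E u)) [0..<k]"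
        using False IH by (simp add: fagg0_def multiset.map_comp o_def sum_unfold_sum_mset degree_def)
      have "(\<Sum>w\<in>nbrs V E u. ?H l w ! (Suc d + i)) = (\<Sum>w\<in>nbrs V E u. P V E Vt Y w i l)"
        if "i < k" for i
        using Suc nb that by (intro sum.cong) auto
      then show ?thesis using False IH P_Suc[OF V False] unfolding eq
        by (auto simp: nth_append min_def)
    qed
  qed
qed

theorem theorem1:
  fixes d k :: nat
  shows "\<exists>(fagg :: nat \<Rightarrow> real list \<Rightarrow> real list multiset \<Rightarrow> real list)
           (fpred :: real list \<Rightarrow> real list).
    \<forall>\<epsilon>::real. \<epsilon> > 0 \<longrightarrow>
    (\<forall>(n::nat) (E :: nat \<Rightarrow> nat \<Rightarrow> bool) (X :: nat \<Rightarrow> real list) (Vt :: nat set)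
        (Y :: nat \<Rightarrow> nat) (v::nat).
      simple_graph_on {1..n} E \<and> connected_on {1..n} E
      \<and> (\<forall>u\<in>{1..n}. length (X u) = d)
      \<and> Vt \<subseteq> {1..n} \<and> Vt \<noteq> {} \<and> (\<forall>u\<in>Vt. Y u < k)
      \<and> v \<in> {1..n} - Vt
      \<longrightarrow> (\<exists>L::nat. L \<ge> 1 \<and> (\<forall>l\<ge>L.
            length (fpred (laf_hidden fagg {1..n} E X Vt Y k l v)) = k
            \<and> (\<Sum>i<k. \<bar>fpred (laf_hidden fagg {1..n} E X Vt Y k l v) ! i
                       - label_prop {1..n} E Vt Y v i\<bar>) \<le> \<epsilon>)))"
proof (intro exI[where x="\<lambda>_. fagg0 d k"] exI[where x="fpred0 d k"] allI impI)
  fix \<epsilon> :: real and n :: nat and E :: "nat \<Rightarrow> nat \<Rightarrow> bool" and X :: "nat \<Rightarrow> real list"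
    and Vt :: "nat set" and Y :: "nat \<Rightarrow> nat" and v :: nat
  assume eps: "\<epsilon> > 0"
  assume H: "simple_graph_on {1..n} E \<and> connected_on {1..n} E
      \<and> (\<forall>u\<in>{1..n}. length (X u) = d)
      \<and> Vt \<subseteq> {1..n} \<and> Vt \<noteq> {} \<and> (\<forall>u\<in>Vt. Y u < k)
      \<and> v \<in> {1..n} - Vt"
  let ?V = "{1..n::nat}"
  let ?H = "laf_hidden (\<lambda>_. fagg0 d k) ?V E X Vt Y k"
  have nb: "\<And>u. nbrs ?V E u \<subseteq> ?V" by (auto simp: nbrs_def)
  have inv: "\<And>l. \<forall>u\<in>?V. length (?H l u) = Suc (d + k)
     \<and> ?H l u ! d = (if u \<in> Vt then 1 else 0)
     \<and> (\<forall>i<k. ?H l u ! (Suc d + i) = P ?V E Vt Y u i l)"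
    by (rule invariant) (use H nb in auto)
  have v: "v \<in> ?V" using H by auto
  have out: "fpred0 d k (?H l v) ! i = P ?V E Vt Y v i l" if "i < k" for l i
    using inv[of l] v that by (simp add: fpred0_def)
  have conv: "(\<lambda>l. P ?V E Vt Y v i l) \<longlonglongrightarrow> label_prop ?V E Vt Y v i" for i
  proof -
    have "summable (\<lambda>t. S ?V E Vt Y v i t)"
      by (rule bounded_imp_summable[where B = 1]) (auto simp: S_nonneg P_le1[unfolded P_def])
    from summable_LIMSEQ'[OF this] show ?thesis
      by (simp add: P_def label_prop_def S_def)
  qed
  have ev: "\<forall>\<^sub>F l in sequentially. \<forall>i\<in>{..<k}. \<bar>P ?V E Vt Y v i l - label_prop ?V E Vt Y v i\<bar> < \<epsilon> / real k"
  proof (cases "k = 0")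
    case True then show ?thesis by simp
  next
    case False
    show ?thesis
    proof (rule eventually_ball_finite, simp, intro ballI)
      fix i
      have "\<forall>\<^sub>F l in sequentially. dist (P ?V E Vt Y v i l) (label_prop ?V E Vt Y v i) < \<epsilon> / real k"
        using conv[of i] eps False by (intro tendstoD) auto
      then show "\<forall>\<^sub>F l in sequentially. \<bar>P ?V E Vt Y v i l - label_prop ?V E Vt Y v i\<bar> < \<epsilon> / real k"
        by (simp add: dist_real_def)
    qed
  qed
  then obtain L where L: "\<And>l. l \<ge> L \<Longrightarrow> \<forall>i\<in>{..<k}. \<bar>P ?V E Vt Y v i l - label_prop ?V E Vt Y v i\<bar> < \<epsilon> / real k"
    unfolding eventually_sequentially by blast
  show "\<exists>L::nat. L \<ge> 1 \<and> (\<forall>l\<ge>L.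
            length (fpred0 d k (?H l v)) = k
            \<and> (\<Sum>i<k. \<bar>fpred0 d k (?H l v) ! i - label_prop ?V E Vt Y v i\<bar>) \<le> \<epsilon>)"
  proof (intro exI conjI allI impI)
    show "1 \<le> max L 1" by simp
    fix l assume l: "max L 1 \<le> l"
    show "length (fpred0 d k (?H l v)) = k" by (simp add: fpred0_def)
    have "(\<Sum>i<k. \<bar>fpred0 d k (?H l v) ! i - label_prop ?V E Vt Y v i\<bar>) \<le> (\<Sum>i<k. \<epsilon> / real k)"
      using L[of l] l out by (intro sum_mono) (auto intro: less_imp_le)
    also have "\<dots> \<le> \<epsilon>" using eps by (cases "k = 0") auto
    finally show "(\<Sum>i<k. \<bar>fpred0 d k (?H l v) ! i - label_prop ?V E Vt Y v i\<bar>) \<le> \<epsilon>" .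
  qed
qed

end
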